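(* Let $\mathcal N=\{N_1,\ldots,N_\ell\}$ ($\ell\ge4$) be a family of $k$-sets satisfying properties (i) and (ii) below, $m=|V|-k$, and fix any run of the decomposition process described in the context. Then the number of indices $x\in\{1,\dots,\ell\}$ with $|\Gamma_x|\ge m^{1/3}$ (heavy $k$-sets) is at most $3m^{2/3}$.
   Context: Setting: $k\ge3$, $\mathcal N=\{N_1,\dots,N_\ell\}$ a family of $k$-subsets, $V=\bigcup N_i$, $n=|V|$, $m=n-k$, satisfying (i) $\bigcap_{i}N_i=\varnothing$ but $\bigcap_{j\ne i}N_j\ne\varnothing$ for all $i$; (ii) every $S\subseteq V$ with $|S|\ge k+1$ contains a $3$-set $T$ not contained in any $N_i$. Assume $\ell\ge4$. Decomposition process: Stage $0$: $\ell_0=\ell$; for each $i\le\ell_0$ choose $a_i^{(0)}\in\bigcap_{r\ne i}N_r$; kernel $A^{(0)}=\{a_1^{(0)},\dots,a_{\ell_0}^{(0)}\}$. Having defined stages $0,\dots,j$ (with surviving sets $N_1,\dots,N_{\ell_j}$, $\ell_j\ge4$, and kernels $A^{(0)},\dots,A^{(j)}$), consider $R^{(j)}=\{N_r\setminus\bigcup_{s\le j}A^{(s)} : r\le\ell_j\}$, which has empty intersection. If every subfamily of $R^{(j)}$ minimal with respect to having empty intersection has only $2$ or $3$ members, stop and set $t=j$. Otherwise choose such a minimal subfamily with at least $4$ members; after reindexing assume it consists of the truncations $N_r\setminus\bigcup_{s\le j}A^{(s)}$, $r\le\ell_{j+1}$; choose $a_i^{(j+1)}\in\bigcap_{r\le\ell_{j+1},r\ne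 i}\bigl(N_r\setminus\bigcup_{s\le j}A^{(s)}\bigr)$ for $i\le\ell_{j+1}$, and let $A^{(j+1)}$ be the set of these. Let $A=\bigcup_{s\le t}A^{(s)}$ and $G=V\setminus A$. For each $i$ let $t_i=\max\{j: i\le\ell_j\}$. For $g\in G$, $t_g=\max\{t_i: g\in N_i\}$ and $I_g=\{i: g\in N_i,\ t_i=t_g\}$. For $x\in\{1,\dots,\ell\}$, $\Gamma_x=\{g\in G: I_g=\{x\}\}$. *)

theory Defs
  imports Complex_Main
begin

definition min_empty :: "(nat \<Rightarrow> 'a set) \<Rightarrow> nat set \<Rightarrow> bool" where
  "min_empty T J \<longleftrightarrow> (\<Inter>r\<in>J. T r) = {} \<and> (\<forall>i\<in>J. (\<Inter>r\<in>J - {i}. T r) \<noteq> {})"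

definition kern :: "(nat \<Rightarrow> nat \<Rightarrow> 'a) \<Rightarrow> (nat \<Rightarrow> nat set) \<Rightarrow> nat \<Rightarrow> 'a set" where
  "kern a I j = (\<Union>s\<le>j. a s ` I s)"

text \<open>A run of the decomposition process with final stage t: I j is the set of (original)
  indices of the surviving sets at stage j, a j i is the chosen kernel element a_i^(j).\<close>
definition decomp_run ::
  "(nat \<Rightarrow> 'a set) \<Rightarrow> nat \<Rightarrow> nat \<Rightarrow> (nat \<Rightarrow> nat set) \<Rightarrow> (nat \<Rightarrow> nat \<Rightarrow> 'a) \<Rightarrow> bool" where
  "decomp_run N l t I a \<longleftrightarrow>
     I 0 = {1..l} \<and>
     (\<forall>i\<in>I 0. a 0 i \<in> (\<Inter>r\<in>I 0 - {i}. N r)) \<and>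
     (\<forall>j<t. I (Suc j) \<subseteq> I j \<and> card (I (Suc j)) \<ge> 4 \<and>
            min_empty (\<lambda>r. N r - kern a I j) (I (Suc j)) \<and>
            (\<forall>i\<in>I (Suc j). a (Suc j) i \<in> (\<Inter>r\<in>I (Suc j) - {i}. N r - kern a I j))) \<and>
     (\<forall>J\<subseteq>I t. min_empty (\<lambda>r. N r - kern a I t) J \<longrightarrow> card J = 2 \<or> card J = 3)"

text \<open>t_i = max{j : i \<le> l_j}\<close>
definition t_idx :: "(nat \<Rightarrow> nat set) \<Rightarrow> nat \<Rightarrow> nat \<Rightarrow> nat" where
  "t_idx I t i = Max {j. j \<le> t \<and> i \<in> I j}"

definition t_elt :: "(nat \<Rightarrow> 'a set) \<Rightarrow> nat \<Rightarrow> (nat \<Rightarrow> nat set) \<Rightarrow> nat \<Rightarrow> 'a \<Rightarrow> nat" where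
  "t_elt N l I t g = Max {t_idx I t i | i. i \<in> {1..l} \<and> g \<in> N i}"

definition I_elt :: "(nat \<Rightarrow> 'a set) \<Rightarrow> nat \<Rightarrow> (nat \<Rightarrow> nat set) \<Rightarrow> nat \<Rightarrow> 'a \<Rightarrow> nat set" where
  "I_elt N l I t g = {i \<in> {1..l}. g \<in> N i \<and> t_idx I t i = t_elt N l I t g}"

definition Gamma ::
  "(nat \<Rightarrow> 'a set) \<Rightarrow> nat \<Rightarrow> nat \<Rightarrow> (nat \<Rightarrow> nat set) \<Rightarrow> (nat \<Rightarrow> nat \<Rightarrow> 'a) \<Rightarrow> nat \<Rightarrow> 'a set" where
  "Gamma N l t I a x = {g \<in> (\<Union>i\<in>{1..l}. N i) - kern a I t. I_elt N l I t g = {x}}"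

end

theory Submission
  imports Defs
begin

theorem lemma12:
  fixes N :: "nat \<Rightarrow> 'a set" and k l t :: nat
    and I :: "nat \<Rightarrow> nat set" and a :: "nat \<Rightarrow> nat \<Rightarrow> 'a"
  assumes k3: "k \<ge> 3"
    and l4: "l \<ge> 4"
    and ksets: "\<forall>i\<in>{1..l}. finite (N i) \<and> card (N i) = k"
    and prop_i: "(\<Inter>i\<in>{1..l}. N i) = {} \<and> (\<forall>i\<in>{1..l}. (\<Inter>j\<in>{1..l} - {i}. N j) \<noteq> {})"
    and prop_ii: "\<forall>S \<subseteq> (\<Union>i\<in>{1..l}. N i). card S \<ge> k + 1 \<longrightarrow>
                    (\<exists>T\<subseteq>S. card T = 3 \<and> (\<forall>i\<in>{1..l}. \<not> T \<subseteq> N i))"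
    and run: "decomp_run N l t I a"
  shows "real (card {x \<in> {1..l}.
            real (card (Gamma N l t I a x)) \<ge> real (card (\<Union>i\<in>{1..l}. N i) - k) powr (1/3)})
         \<le> 3 * real (card (\<Union>i\<in>{1..l}. N i) - k) powr (2/3)"
proof -
  define V where "V = (\<Union>i\<in>{1..l}. N i)"
  define M where "M = real (card V - k)"
  define H where "H = {x \<in> {1..l}. real (card (Gamma N l t I a x)) \<ge> M powr (1/3)}"
  have finV: "finite V" unfolding V_def using ksets by auto
  have NV: "N i \<subseteq> V" if "i \<in> {1..l}" for i unfolding V_def using that by auto
  have M1: "M \<ge> 1"
  proof (rule ccontr)
    assume "\<not> M \<ge> 1"
    hence "card V \<le> k" unfolding M_def by simp
    hence eq: "N i = V" if "i \<in> {1..l}" for i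
      using card_subset_eq[OF finV NV[OF that]] ksets that by (metis card_mono finV NV[OF that] le_antisym)
    have "(\<Inter>i\<in>{1..l}. N i) = V" using eq l4 by auto
    moreover have "V \<noteq> {}"
    proof
      assume "V = {}"
      hence "N 1 = {}" using eq[of 1] l4 by simp
      thus False using ksets k3 l4 proof -
        have "card (N 1) = k" using ksets l4 by simp
        thus False using \<open>N 1 = {}\<close> k3 by simp
      qed
    qed
    ultimately show False using prop_i by simp
  qed
  define T where "T = Max (t_idx I t ` {1..l})"
  have "T \<in> t_idx I t ` {1..l}" unfolding T_def using l4 by (intro Max_in) auto
  then obtain x0 where x0: "x0 \<in> {1..l}" "t_idx I t x0 = T" by auto
  have x0max: "t_idx I t y \<le> t_idx I t x0" if "y \<in> {1..l}" for y
    unfolding x0(2) T_def using that by (intro Max_ge) auto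
  have GV: "Gamma N l t I a y \<subseteq> V" for y unfolding Gamma_def V_def by auto
  have key: "g \<notin> N x0" if y: "y \<in> {1..l}" "y \<noteq> x0" and g: "g \<in> Gamma N l t I a y" for y g
  proof
    assume gx: "g \<in> N x0"
    have Ig: "I_elt N l I t g = {y}" using g unfolding Gamma_def by auto
    have yin: "t_idx I t y = t_elt N l I t g" using Ig unfolding I_elt_def by auto
    have fin: "finite {t_idx I t i | i. i \<in> {1..l} \<and> g \<in> N i}"
      by (rule finite_subset[of _ "t_idx I t ` {1..l}"]) auto
    have "t_idx I t x0 \<le> t_elt N l I t g" unfolding t_elt_def
      using x0(1) gx by (intro Max_ge[OF fin]) auto
    hence "t_idx I t x0 = t_elt N l I t g" using yin x0max[OF y(1)] by simp
    hence "x0 \<in> I_elt N l I t g" unfolding I_elt_def using x0(1) gx by simp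
    thus False using Ig y(2) by simp
  qed
  define H' where "H' = H - {x0}"
  have finH': "finite H'" unfolding H'_def H_def by auto
  have disj: "\<forall>x\<in>H'. \<forall>y\<in>H'. x \<noteq> y \<longrightarrow> Gamma N l t I a x \<inter> Gamma N l t I a y = {}"
    unfolding Gamma_def by auto
  have "sum (\<lambda>y. card (Gamma N l t I a y)) H' = card (\<Union>y\<in>H'. Gamma N l t I a y)"
    using card_UN_disjoint[OF finH' _ disj] finite_subset[OF GV finV] by simp
  also have "\<dots> \<le> card (V - N x0)"
  proof (rule card_mono)
    show "finite (V - N x0)" using finV by simp
    show "(\<Union>y\<in>H'. Gamma N l t I a y) \<subseteq> V - N x0"
      using GV key unfolding H'_def H_def by blast
  qed
  also have "\<dots> = card V - k" using card_Diff_subset[OF _ NV[OF x0(1)]] ksets x0(1) by simp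
  finally have s: "real (sum (\<lambda>y. card (Gamma N l t I a y)) H') \<le> M" unfolding M_def by linarith
  have "real (card H') * M powr (1/3) \<le> (\<Sum>y\<in>H'. real (card (Gamma N l t I a y)))"
    by (rule sum_bounded_below) (auto simp: H'_def H_def)
  also have "\<dots> \<le> M" using s by simp
  finally have c1: "real (card H') * M powr (1/3) \<le> M" .
  have Msplit: "M = M powr (1/3) * M powr (2/3)"
    using M1 by (simp add: powr_add[symmetric])
  have pos: "M powr (1/3) > 0" using M1 by simp
  have "real (card H') \<le> M powr (2/3)"
  proof -
    have "real (card H') * M powr (1/3) \<le> M powr (2/3) * M powr (1/3)"
      using c1 Msplit by (simp add: mult.commute)
    thus ?thesis using pos by simp
  qed
  moreover have "card H \<le> card H' + 1"
  proof -
    have "finite H" unfolding H_def by auto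
    hence "card H \<le> card (insert x0 H')" unfolding H'_def by (intro card_mono) auto
    also have "\<dots> \<le> card H' + 1" using finH' by (simp add: card_insert_if)
    finally show ?thesis .
  qed
  moreover have "1 \<le> M powr (2/3)" using M1 by (simp add: ge_one_powr_ge_zero)
  ultimately have "real (card H) \<le> 3 * M powr (2/3)" by linarith
  thus ?thesis unfolding H_def M_def V_def .
qed

end
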